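(* Let $\mathscr{M}_n$ be the monoid of $n\times n$ Boolean matrices with at least one $1$ in every row and every column, under Boolean matrix multiplication. For all $\alpha,\beta\in\mathscr{M}_n$, with Green's relations taken in $\mathscr{M}_n$: (1) $\alpha\,\mathcal{L}\,\beta$ iff $\langle R(\alpha)\rangle=\langle R(\beta)\rangle$; (2) $\alpha\,\mathcal{R}\,\beta$ iff $\langle C(\alpha)\rangle=\langle C(\beta)\rangle$; (3) $\alpha\,\mathcal{H}\,\beta$ iff $\langle R(\alpha)\rangle=\langle R(\beta)\rangle$ and $\langle C(\alpha)\rangle=\langle C(\beta)\rangle$.
   Context: Boolean arithmetic uses $1+1=1$; rows and columns are vectors in $\{0,1\}^n$, added coordinatewise in this arithmetic and compared coordinatewise ($u\le v$ iff $u_i=1$ implies $v_i=1$). $\mathscr{M}_n$ is isomorphic to the monoid of multipermutations on $[n]$ (binary relations in which every element has a successor and a predecessor) under composition of relations. For $\alpha\in\mathscr{M}_n$: $R(\alpha)$ is the set of rows and $C(\alpha)$ the set of columns of $\alpha$; the row space $V(\alpha)$ is the set of all Boolean sums of rows of $\alpha$ together with the zero vector, and the column space $W(\alpha)$ likewise for columns. $\langle R(\alpha)\rangle=\{\rho\in V(\alpha)\setminus\{0\}:\rho\le\alpha_j\text{ for some row }\alpha_j\text{ of }\alpha\}$ and $\langle C(\alpha)\rangle=\{\kappa\in W(\alpha)\setminus\{0\}:\kappa\le\gamma\text{ for some column }\gamma\text{ of }\alpha\}$. *)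

theory Defs
  imports Main
begin

text \<open>An n x n Boolean matrix is a function 'n => 'n => bool over a finite index type 'n
(so n = CARD('n) is arbitrary). Vectors in {0,1}^n are 'n => bool; the pointwise order
on functions to bool is exactly the coordinatewise order, and Boolean sum is pointwise or.\<close>

type_synonym 'n bmat = "'n \<Rightarrow> 'n \<Rightarrow> bool"
type_synonym 'n bvec = "'n \<Rightarrow> bool"

definition bmult :: "'n bmat \<Rightarrow> 'n bmat \<Rightarrow> 'n bmat" where
  "bmult A B = (\<lambda>i j. \<exists>k. A i k \<and> B k j)"

definition in_Mn :: "'n::finite bmat \<Rightarrow> bool" where
  "in_Mn A \<longleftrightarrow> (\<forall>i. \<exists>j. A i j) \<and> (\<forall>j. \<exists>i. A i j)"

text \<open>Green's relations in the monoid M_n (which contains the identity matrix).\<close>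
definition greenL :: "'n::finite bmat \<Rightarrow> 'n bmat \<Rightarrow> bool" where
  "greenL A B \<longleftrightarrow> (\<exists>G. in_Mn G \<and> A = bmult G B) \<and> (\<exists>D. in_Mn D \<and> B = bmult D A)"

definition greenR :: "'n::finite bmat \<Rightarrow> 'n bmat \<Rightarrow> bool" where
  "greenR A B \<longleftrightarrow> (\<exists>G. in_Mn G \<and> A = bmult B G) \<and> (\<exists>D. in_Mn D \<and> B = bmult A D)"

definition greenH :: "'n::finite bmat \<Rightarrow> 'n bmat \<Rightarrow> bool" where
  "greenH A B \<longleftrightarrow> greenL A B \<and> greenR A B"

definition rows :: "'n bmat \<Rightarrow> 'n bvec set" where
  "rows A = range A"

definition cols :: "'n bmat \<Rightarrow> 'n bvec set" where
  "cols A = range (\<lambda>j. \<lambda>i. A i j)"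

text \<open>Span: all Boolean sums of subsets of the given vectors (the empty sum is the zero vector).\<close>
definition bspan :: "'n bvec set \<Rightarrow> 'n bvec set" where
  "bspan X = {v. \<exists>S\<subseteq>X. v = (\<lambda>k. \<exists>x\<in>S. x k)}"

definition row_space :: "'n bmat \<Rightarrow> 'n bvec set" where
  "row_space A = bspan (rows A)"

definition col_space :: "'n bmat \<Rightarrow> 'n bvec set" where
  "col_space A = bspan (cols A)"

definition genR :: "'n bmat \<Rightarrow> 'n bvec set" where
  "genR A = {\<rho> \<in> row_space A. \<rho> \<noteq> (\<lambda>_. False) \<and> (\<exists>r\<in>rows A. \<rho> \<le> r)}"

definition genC :: "'n bmat \<Rightarrow> 'n bvec set" where
  "genC A = {\<kappa> \<in> col_space A. \<kappa> \<noteq> (\<lambda>_. False) \<and> (\<exists>c\<in>cols A. \<kappa> \<le> c)}"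

end

theory Submission
  imports Defs
begin

lemma row_in_genR:
  assumes "in_Mn A" shows "A i \<in> genR A"
proof -
  have "A i = (\<lambda>k. \<exists>x\<in>{A i}. x k)" by simp
  moreover have "{A i} \<subseteq> rows A" by (simp add: rows_def)
  ultimately have "A i \<in> row_space A" unfolding row_space_def bspan_def by blast
  moreover obtain j where "A i j" using assms unfolding in_Mn_def by blast
  ultimately show ?thesis unfolding genR_def rows_def by auto
qed

lemma construct_L:
  assumes "in_Mn A" "in_Mn B"
    and sp: "\<And>i. A i \<in> bspan (rows B)"
    and cov: "\<And>k. \<exists>j. B k \<le> A j"
  shows "\<exists>G. in_Mn G \<and> A = bmult G B"
proof -
  define G where "G = (\<lambda>i k. B k \<le> A i)"
  have key: "A i j \<Longrightarrow> \<exists>k. B k \<le> A i \<and> B k j" for i j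
  proof -
    assume a: "A i j"
    obtain S where S: "S \<subseteq> rows B" "A i = (\<lambda>k. \<exists>x\<in>S. x k)"
      using sp[of i] unfolding bspan_def by blast
    then obtain x where "x \<in> S" "x j" using a by metis
    moreover have "x \<le> A i" using S \<open>x \<in> S\<close> by (auto simp: le_fun_def)
    ultimately show ?thesis using S(1) unfolding rows_def by blast
  qed
  have "A = bmult G B"
    unfolding bmult_def G_def
  proof (intro ext iffI)
    fix i j assume "A i j"
    then show "\<exists>k. B k \<le> A i \<and> B k j" using key by blast
  next
    fix i j assume "\<exists>k. B k \<le> A i \<and> B k j"
    then show "A i j" by (auto simp: le_fun_def)
  qed
  moreover have "in_Mn G"
    unfolding in_Mn_def G_def
  proof (intro conjI allI)
    fix i
    obtain j where "A i j" using assms(1) unfolding in_Mn_def by blast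
    then show "\<exists>k. B k \<le> A i" using key by blast
  next
    fix k show "\<exists>i. B k \<le> A i" using cov by blast
  qed
  ultimately show ?thesis by blast
qed

lemma span_mult:
  assumes "A = bmult G B" shows "bspan (rows A) \<subseteq> bspan (rows B)"
proof
  fix v assume "v \<in> bspan (rows A)"
  then obtain S where S: "S \<subseteq> rows A" "v = (\<lambda>k. \<exists>x\<in>S. x k)" unfolding bspan_def by blast
  define S' where "S' = {B k | k. \<exists>i. A i \<in> S \<and> G i k}"
  have "S' \<subseteq> rows B" unfolding S'_def rows_def by blast
  moreover have "v = (\<lambda>k. \<exists>x\<in>S'. x k)"
  proof (intro ext iffI)
    fix k' assume "v k'"
    then obtain x where "x \<in> S" "x k'" using S by blast
    then obtain i where "x = A i" using S(1) unfolding rows_def by blast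
    then obtain k where "G i k" "B k k'" using \<open>x k'\<close> assms unfolding bmult_def by blast
    then show "\<exists>x\<in>S'. x k'" unfolding S'_def using \<open>x \<in> S\<close> \<open>x = A i\<close> by blast
  next
    fix k' assume "\<exists>x\<in>S'. x k'"
    then obtain k i where "A i \<in> S" "G i k" "B k k'" unfolding S'_def by blast
    then have "A i k'" using assms unfolding bmult_def by blast
    then show "v k'" using S \<open>A i \<in> S\<close> by blast
  qed
  ultimately show "v \<in> bspan (rows B)" unfolding bspan_def by blast
qed

lemma below_mult:
  assumes "B = bmult D A" "in_Mn D" shows "\<exists>k. A j \<le> B k"
proof -
  obtain k where "D k j" using assms(2) unfolding in_Mn_def by blast
  then have "A j \<le> B k" using assms(1) unfolding bmult_def by (auto simp: le_fun_def)
  then show ?thesis by blast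
qed

lemma genR_sub:
  assumes "A = bmult G B" "B = bmult D A" "in_Mn D"
  shows "genR A \<subseteq> genR B"
proof
  fix r assume r: "r \<in> genR A"
  then have "r \<in> row_space B" using span_mult[OF assms(1)]
    unfolding genR_def row_space_def by blast
  moreover obtain j where "r \<le> A j" using r unfolding genR_def rows_def by blast
  moreover obtain k where "A j \<le> B k" using below_mult[OF assms(2,3)] by blast
  ultimately show "r \<in> genR B" using r unfolding genR_def rows_def
    by (auto intro: order_trans)
qed

lemma L_char:
  assumes "in_Mn A" "in_Mn B"
  shows "greenL A B \<longleftrightarrow> genR A = genR B"
proof
  assume "greenL A B"
  then obtain G D where "in_Mn G" "A = bmult G B" "in_Mn D" "B = bmult D A"
    unfolding greenL_def by blast
  then show "genR A = genR B" using genR_sub by (metis subset_antisym)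
next
  assume e: "genR A = genR B"
  have g1: "\<exists>G. in_Mn G \<and> A = bmult G B"
  proof (rule construct_L[OF assms])
    fix i show "A i \<in> bspan (rows B)"
      using row_in_genR[OF assms(1), of i] e unfolding genR_def row_space_def by auto
  next
    fix k show "\<exists>j. B k \<le> A j"
      using row_in_genR[OF assms(2), of k] e unfolding genR_def rows_def by auto
  qed
  have g2: "\<exists>G. in_Mn G \<and> B = bmult G A"
  proof (rule construct_L[OF assms(2,1)])
    fix i show "B i \<in> bspan (rows A)"
      using row_in_genR[OF assms(2), of i] e unfolding genR_def row_space_def by auto
  next
    fix k show "\<exists>j. A k \<le> B j"
      using row_in_genR[OF assms(1), of k] e unfolding genR_def rows_def by auto
  qed
  show "greenL A B" using g1 g2 unfolding greenL_def by blast
qed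

definition tr :: "'n bmat \<Rightarrow> 'n bmat" where "tr A = (\<lambda>i j. A j i)"

lemma tr_tr[simp]: "tr (tr A) = A" by (simp add: tr_def)

lemma tr_Mn[simp]: "in_Mn (tr A) = in_Mn A"
  unfolding in_Mn_def tr_def by blast

lemma tr_mult: "tr (bmult A B) = bmult (tr B) (tr A)"
  unfolding tr_def bmult_def by blast

lemma genC_tr: "genC A = genR (tr A)"
  unfolding genC_def genR_def col_space_def row_space_def cols_def rows_def tr_def by simp

lemma tr_eq: "(A = bmult B G) = (tr A = bmult (tr G) (tr B))"
  by (metis tr_mult tr_tr)

lemma greenR_tr: "greenR A B = greenL (tr A) (tr B)"
proof
  assume "greenR A B"
  then show "greenL (tr A) (tr B)" unfolding greenR_def greenL_def
    by (metis tr_eq tr_Mn)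
next
  assume "greenL (tr A) (tr B)"
  then obtain G D where "in_Mn G" "tr A = bmult G (tr B)" "in_Mn D" "tr B = bmult D (tr A)"
    unfolding greenL_def by blast
  then show "greenR A B" unfolding greenR_def
    by (metis tr_eq tr_Mn tr_tr)
qed

theorem theorem4p2:
  fixes \<alpha> \<beta> :: "'n::finite bmat"
  assumes "in_Mn \<alpha>" and "in_Mn \<beta>"
  shows "(greenL \<alpha> \<beta> \<longleftrightarrow> genR \<alpha> = genR \<beta>)
       \<and> (greenR \<alpha> \<beta> \<longleftrightarrow> genC \<alpha> = genC \<beta>)
       \<and> (greenH \<alpha> \<beta> \<longleftrightarrow> genR \<alpha> = genR \<beta> \<and> genC \<alpha> = genC \<beta>)"
proof -
  have 1: "greenL \<alpha> \<beta> \<longleftrightarrow> genR \<alpha> = genR \<beta>" using L_char assms by blast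
  have 2: "greenR \<alpha> \<beta> \<longleftrightarrow> genC \<alpha> = genC \<beta>"
    unfolding greenR_tr genC_tr using L_char assms tr_Mn by blast
  show ?thesis using 1 2 unfolding greenH_def by blast
qed

end
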